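(* Consider the caching network and the backhaul-eavesdropper scenario $S_1$ described in the context, with a placement $\mathbf{m}=(m_1,\dots,m_N)$ of integers $0\le m_j\le n$. For each $j$ let $I_j \triangleq \min\left(S, \lfloor n/m_j\rfloor\right)$ (with $I_j=S$ when $m_j=0$), and assume $\sum_{d=1}^{I_j} d\gamma_d>0$. Then the network is secure in scenario $S_1$ if and only if, for every $j=1,\dots,N$, $$ m_j > \frac{n}{Q p_j}\cdot \frac{Q p_j \sum_{d=1}^{I_j}\gamma_d - 1}{\sum_{d=1}^{I_j} d\,\gamma_d}. $$
   Context: A macro base station (MBS) has access to a library of $N$ files $F_1,\dots,F_N$; file $F_j$ is requested with probability $p_j>0$, $\sum_j p_j=1$. There are $N_{\text{SBS}}$ small-cell base stations (SBSs), each with a cache. Each file is split into $n$ fragments and encoded with a code such that any $n$ distinct encoded packets of a file suffice to recover it, while fewer than $n$ distinct packets do not allow recovery of the file. A placement $\mathbf{m}=(m_1,\dots,m_N)$ means each SBS stores $m_j$ encoded packets of $F_j$, with packets stored at different SBSs all distinct. A user is served by exactly $d$ SBSs with probability $\gamma_d$, $d=1,\dots,S$, where $\gamma_d\ge 0$, $\sum_{d=1}^S\gamma_d=1$, and $S\le N_{\text{SBS}}$ is the maximum number of SBSs serving a user. A user requesting $F_j$ and served by $d$ SBSs receives $d m_j$ distinct packets from them, and the MBS sends the missing $n\left(1-\min(1, d m_j/n)\right)$ new (distinct) packets over the backhaul. Scenario $S_1$: each SBS receives $Q$ requests during the delivery phase, of which $Q p_j$ are for file $F_j$; an eavesdropper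 intercepts all packets sent by the MBS over one MBS-to-SBS link, so the number of (all distinct) packets of $F_j$ it collects is $P_j=\sum_{d=1}^{S} Q\gamma_d p_j\, n\left(1-\min(1,d m_j/n)\right)$. The network is secure in scenario $S_1$ if the eavesdropper cannot recover any file, i.e., $P_j<n$ for all $j=1,\dots,N$. *)

theory Defs
  imports Complex_Main
begin

definition eaves_packets ::
  "nat \<Rightarrow> nat \<Rightarrow> nat \<Rightarrow> (nat \<Rightarrow> real) \<Rightarrow> (nat \<Rightarrow> real) \<Rightarrow> (nat \<Rightarrow> nat) \<Rightarrow> nat \<Rightarrow> real" where
  "eaves_packets n S Q \<gamma> p m j =
     (\<Sum>d=1..S. real Q * \<gamma> d * p j * real n * (1 - min 1 (real d * real (m j) / real n)))"

text \<open>Secure in scenario S1: the eavesdropper cannot recover any file, P_j < n for all j.\<close>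
definition secure_S1 ::
  "nat \<Rightarrow> nat \<Rightarrow> nat \<Rightarrow> nat \<Rightarrow> (nat \<Rightarrow> real) \<Rightarrow> (nat \<Rightarrow> real) \<Rightarrow> (nat \<Rightarrow> nat) \<Rightarrow> bool" where
  "secure_S1 N n S Q \<gamma> p m \<longleftrightarrow> (\<forall>j\<in>{1..N}. eaves_packets n S Q \<gamma> p m j < real n)"

definition I_idx :: "nat \<Rightarrow> nat \<Rightarrow> (nat \<Rightarrow> nat) \<Rightarrow> nat \<Rightarrow> nat" where
  "I_idx n S m j = (if m j = 0 then S else min S (n div m j))"

end

theory Submission
  imports Defs
begin

lemma eaves_eq:
  assumes n_pos: "n > 0"
  shows "eaves_packets n S Q \<gamma> p m j =
    real Q * p j * (real n * (\<Sum>d=1..I_idx n S m j. \<gamma> d) - real (m j) * (\<Sum>d=1..I_idx n S m j. real d * \<gamma> d))"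
proof -
  let ?I = "I_idx n S m j"
  let ?f = "\<lambda>d. real Q * \<gamma> d * p j * real n * (1 - min 1 (real d * real (m j) / real n))"
  have IS: "?I \<le> S" unfolding I_idx_def by auto
  have low: "\<And>d. d \<le> ?I \<Longrightarrow> real d * real (m j) \<le> real n"
  proof -
    fix d assume d: "d \<le> ?I"
    show "real d * real (m j) \<le> real n"
    proof (cases "m j = 0")
      case True then show ?thesis by simp
    next
      case False
      then have "d \<le> n div m j" using d unfolding I_idx_def by auto
      then have "d * m j \<le> n div m j * m j" by simp
      also have "\<dots> \<le> n" by simp
      finally show ?thesis by (metis of_nat_le_iff of_nat_mult)
    qed
  qed
  have high: "\<And>d. ?I < d \<Longrightarrow> d \<le> S \<Longrightarrow> ?f d = 0"
  proof -
    fix d assume d: "?I < d" "d \<le> S"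
    then have m0: "m j \<noteq> 0" unfolding I_idx_def by (auto split: if_splits)
    then have "n div m j < d" using d unfolding I_idx_def by auto
    then have "n < d * m j" using m0
      by (metis div_less_iff_less_mult gr0I mult.commute)
    then have "real n < real d * real (m j)" by (metis of_nat_less_iff of_nat_mult)
    then have "real d * real (m j) / real n \<ge> 1" using n_pos by simp
    then show "?f d = 0" by simp
  qed
  have split: "{1..S} = {1..?I} \<union> {?I+1..S}" using IS by auto
  have "eaves_packets n S Q \<gamma> p m j = sum ?f {1..?I} + sum ?f {?I+1..S}"
    unfolding eaves_packets_def split by (rule sum.union_disjoint) auto
  also have "sum ?f {?I+1..S} = 0" using high by (intro sum.neutral) auto
  also have "sum ?f {1..?I} = (\<Sum>d=1..?I. real Q * p j * (real n * \<gamma> d - real (m j) * (real d * \<gamma> d)))"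
  proof (rule sum.cong)
    fix d assume "d \<in> {1..?I}"
    then have "min 1 (real d * real (m j) / real n) = real d * real (m j) / real n"
      using low[of d] n_pos by (auto simp: field_simps)
    then show "?f d = real Q * p j * (real n * \<gamma> d - real (m j) * (real d * \<gamma> d))"
      using n_pos by (simp add: field_simps)
  qed simp
  also have "\<dots> = real Q * p j * (\<Sum>d=1..?I. (real n * \<gamma> d - real (m j) * (real d * \<gamma> d)))"
    by (simp add: sum_distrib_left)
  also have "(\<Sum>d=1..?I. (real n * \<gamma> d - real (m j) * (real d * \<gamma> d))) =
     real n * (\<Sum>d=1..?I. \<gamma> d) - real (m j) * (\<Sum>d=1..?I. real d * \<gamma> d)"
    by (simp add: sum_subtractf sum_distrib_left)
  finally show ?thesis by simp
qed

theorem proposition3: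
  fixes N N_SBS S n Q :: nat
    and p \<gamma> :: "nat \<Rightarrow> real"
    and m :: "nat \<Rightarrow> nat"
  assumes n_pos: "n > 0"
    and Q_pos: "Q > 0"
    and S_pos: "1 \<le> S" and S_le: "S \<le> N_SBS"
    and p_pos: "\<forall>j\<in>{1..N}. p j > 0"
    and p_sum: "(\<Sum>j=1..N. p j) = 1"
    and gamma_nonneg: "\<forall>d\<in>{1..S}. \<gamma> d \<ge> 0"
    and gamma_sum: "(\<Sum>d=1..S. \<gamma> d) = 1"
    and m_le: "\<forall>j\<in>{1..N}. m j \<le> n"
    and denom_pos: "\<forall>j\<in>{1..N}. (\<Sum>d=1..I_idx n S m j. real d * \<gamma> d) > 0"
  shows "secure_S1 N n S Q \<gamma> p m \<longleftrightarrow>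
    (\<forall>j\<in>{1..N}. real (m j) >
       real n / (real Q * p j) *
       ((real Q * p j * (\<Sum>d=1..I_idx n S m j. \<gamma> d) - 1)
        / (\<Sum>d=1..I_idx n S m j. real d * \<gamma> d)))"
  unfolding secure_S1_def
proof (intro ball_cong refl)
  fix j assume j: "j \<in> {1..N}"
  define G where "G = (\<Sum>d=1..I_idx n S m j. \<gamma> d)"
  define D where "D = (\<Sum>d=1..I_idx n S m j. real d * \<gamma> d)"
  define c where "c = real Q * p j"
  have D: "D > 0" using denom_pos j D_def by auto
  have c: "c > 0" using p_pos j Q_pos c_def by auto
  have "eaves_packets n S Q \<gamma> p m j = c * (real n * G - real (m j) * D)"
    using eaves_eq[OF n_pos] G_def D_def c_def by simp
  moreover have "(c * (real n * G - real (m j) * D) < real n) \<longleftrightarrow>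
      (real (m j) > real n / c * ((c * G - 1) / D))"
    using c D by (simp add: field_simps)
  ultimately show "(eaves_packets n S Q \<gamma> p m j < real n) =
    (real (m j) > real n / (real Q * p j) *
       ((real Q * p j * (\<Sum>d=1..I_idx n S m j. \<gamma> d) - 1)
        / (\<Sum>d=1..I_idx n S m j. real d * \<gamma> d)))"
    using G_def D_def c_def by simp
qed

end
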